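(* There is no incompressible Følner sequence in the group $\mathbb Z^\infty=\bigoplus_{n=1}^\infty\mathbb Z$.
   Context: A sequence of translates $\{W_{n(i)}+f_i\}_{i=1}^I$ is incremental if $n(1)\ge\dots\ge n(I)$ and $f_i\notin\bigcup_{j<i}(W_{n(j)}+f_j)$. An increasing sequence $\{W_n\}$ of finite sets containing $0$ is incompressible if there is a constant $C$ such that for every incremental sequence at most $C$ of the sets $W_{n(i)}+f_i$ contain $0$. Følner: $|W_n\triangle(g+W_n)|/|W_n|\to0$ for every $g$. *)

theory Defs
  imports "HOL-Analysis.Analysis" "HOL-Library.Poly_Mapping"
begin

text \<open>The group Z-infinity (direct sum of countably many copies of Z) is the type of
  finitely supported functions from nat to int (Poly_Mapping), with pointwise addition.\<close>

type_synonym zinf = "nat \<Rightarrow>\<^sub>0 int"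

definition translate :: "'a::ab_group_add set \<Rightarrow> 'a \<Rightarrow> 'a set" where
  "translate W f = (\<lambda>w. w + f) ` W"

definition incremental :: "(nat \<Rightarrow> 'a::ab_group_add set) \<Rightarrow> (nat \<times> 'a) list \<Rightarrow> bool" where
  "incremental W xs \<longleftrightarrow>
     sorted_wrt (\<lambda>p q. fst p \<ge> fst q) xs \<and>
     (\<forall>i < length xs. snd (xs ! i) \<notin>
        (\<Union>j < i. translate (W (fst (xs ! j))) (snd (xs ! j))))"

definition count_zero :: "(nat \<Rightarrow> 'a::ab_group_add set) \<Rightarrow> (nat \<times> 'a) list \<Rightarrow> nat" where
  "count_zero W xs = card {i. i < length xs \<and> 0 \<in> translate (W (fst (xs ! i))) (snd (xs ! i))}"

definition incompressible :: "(nat \<Rightarrow> 'a::ab_group_add set) \<Rightarrow> bool" where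
  "incompressible W \<longleftrightarrow>
     (\<forall>n. finite (W n) \<and> 0 \<in> W n) \<and> (\<forall>n. W n \<subseteq> W (Suc n)) \<and>
     (\<exists>C::nat. \<forall>xs. incremental W xs \<longrightarrow> count_zero W xs \<le> C)"

definition folner :: "(nat \<Rightarrow> 'a::ab_group_add set) \<Rightarrow> bool" where
  "folner W \<longleftrightarrow>
     (\<forall>g. (\<lambda>n. real (card ((W n - (\<lambda>w. g + w) ` W n) \<union> ((\<lambda>w. g + w) ` W n - W n)))
               / real (card (W n))) \<longlonglongrightarrow> 0)"

end

theory Submission
  imports Defs
begin

lemma ex_min_int:
  fixes f :: "'a \<Rightarrow> int"
  assumes "finite S" "S \<noteq> {}"
  shows "\<exists>x\<in>S. \<forall>y\<in>S. f x \<le> f y"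
  using ex_is_arg_min_if_finite[OF assms, of f] by (force simp: is_arg_min_def)

lemma folner_nz:
  fixes W :: "nat \<Rightarrow> zinf set"
  assumes fin: "\<And>n. finite (W n)" and z: "\<And>n. 0 \<in> W n" and fo: "folner W"
  shows "\<exists>N. \<exists>w\<in>W N. poly_mapping.lookup w (k::nat) \<noteq> 0"
proof (rule ccontr)
  assume "\<not> ?thesis"
  hence allz: "\<And>N w. w \<in> W N \<Longrightarrow> poly_mapping.lookup w k = 0" by auto
  define g :: zinf where "g = Poly_Mapping.single (k::nat) (1::int)"
  let ?X = "\<lambda>n. real (card ((W n - (\<lambda>w. g + w) ` W n) \<union> ((\<lambda>w. g + w) ` W n - W n))) / real (card (W n))"
  have lim: "?X \<longlonglongrightarrow> 0" using fo unfolding folner_def by blast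
  have ge: "?X n \<ge> 1" for n
  proof -
    have disj: "W n - (\<lambda>w. g + w) ` W n = W n"
    proof -
      have "x \<notin> (\<lambda>w. g + w) ` W n" if "x \<in> W n" for x
      proof
        assume "x \<in> (\<lambda>w. g + w) ` W n"
        then obtain w where w: "w \<in> W n" "x = g + w" by auto
        have "poly_mapping.lookup x k = 1 + poly_mapping.lookup w k" using w by (simp add: lookup_add g_def)
        thus False using allz[OF w(1)] allz[OF that] by simp
      qed
      thus ?thesis by auto
    qed
    have "card (W n) \<le> card ((W n - (\<lambda>w. g + w) ` W n) \<union> ((\<lambda>w. g + w) ` W n - W n))"
      by (rule card_mono) (use fin[of n] disj in auto)
    moreover have "card (W n) > 0" using fin[of n] z[of n] card_gt_0_iff by blast
    ultimately show ?thesis by simp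
  qed
  have "eventually (\<lambda>n. ?X n < 1) sequentially"
    by (rule order_tendstoD(2)[OF lim]) simp
  then obtain n where "?X n < 1" by (auto simp: eventually_sequentially)
  with ge[of n] show False by simp
qed

lemma construct:
  fixes W :: "nat \<Rightarrow> zinf set"
  assumes fin: "\<And>n. finite (W n)" and z: "\<And>n. 0 \<in> W n" and inc: "\<And>n. W n \<subseteq> W (Suc n)"
    and nz: "\<And>k. \<exists>N. \<exists>w\<in>W N. poly_mapping.lookup w k \<noteq> 0"
  shows "\<exists>xs. length xs = m \<and> incremental W xs \<and> (\<forall>p\<in>set xs. 0 \<in> translate (W (fst p)) (snd p))
     \<and> (\<exists>\<phi>::zinf \<Rightarrow> int. (\<forall>a b. \<phi> (a + b) = \<phi> a + \<phi> b) \<and> (\<forall>p\<in>set xs. \<phi> (snd p) < 0))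
     \<and> (\<exists>D. \<forall>p\<in>set xs. \<forall>k\<ge>D. poly_mapping.lookup (snd p) k = 0)"
proof (induction m)
  case 0
  show ?case
    by (rule exI[of _ "[]"]) (auto simp: incremental_def intro: exI[of _ "\<lambda>_. 0"])
next
  case (Suc m)
  then obtain xs and \<phi> :: "zinf \<Rightarrow> int" and D where len: "length xs = m" and incr: "incremental W xs"
    and zs: "\<forall>p\<in>set xs. 0 \<in> translate (W (fst p)) (snd p)"
    and add: "\<And>a b. \<phi> (a + b) = \<phi> a + \<phi> b" and neg: "\<forall>p\<in>set xs. \<phi> (snd p) < 0"
    and Dp: "\<forall>p\<in>set xs. \<forall>k\<ge>D. poly_mapping.lookup (snd p) k = 0" by blast
  have mono: "n \<le> n' \<Longrightarrow> W n \<subseteq> W n'" for n n'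
    using lift_Suc_mono_le[of W, OF inc] by blast
  obtain N0 w1 where w1: "w1 \<in> W N0" "poly_mapping.lookup w1 D \<noteq> 0" using nz[of D] by blast
  define N where "N = Max (insert N0 (fst ` set xs))"
  have NN0: "N0 \<le> N" and Np: "\<And>p. p \<in> set xs \<Longrightarrow> fst p \<le> N"
    unfolding N_def by auto
  define B where "B = W N"
  have w1B: "w1 \<in> B" using mono[OF NN0] w1 B_def by blast
  have finB: "finite B" using fin B_def by simp
  define s :: int where "s = (if poly_mapping.lookup w1 D > 0 then -1 else 1)"
  have s1: "s * poly_mapping.lookup w1 D < 0" using w1(2) by (auto simp: s_def)
  obtain w0 where w0: "w0 \<in> B" "\<forall>y\<in>B. s * poly_mapping.lookup w0 D \<le> s * poly_mapping.lookup y D"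
    using ex_min_int[OF finB, of "\<lambda>w. s * poly_mapping.lookup w D"] w1B by blast
  define a where "a = s * poly_mapping.lookup w0 D"
  have aneg: "a < 0" using w0(2) w1B s1 a_def by force
  define B' where "B' = {w\<in>B. s * poly_mapping.lookup w D = a}"
  have finB': "finite B'" using finB B'_def by simp
  have w0B': "w0 \<in> B'" using w0 a_def B'_def by simp
  obtain u where u: "u \<in> B'" "\<forall>y\<in>B'. \<phi> u \<le> \<phi> y"
    using ex_min_int[OF finB', of \<phi>] w0B' by blast
  have uB: "u \<in> B" and ua: "s * poly_mapping.lookup u D = a" using u(1) B'_def by auto
  define f0 where "f0 = - u"
  have phi0: "\<phi> 0 = 0" using add[of 0 0] by simp
  have phineg: "\<phi> (- x) = - \<phi> x" for x using add[of x "-x"] phi0 by simp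
  have notin: "snd p \<notin> translate B f0" if p: "p \<in> set xs" for p
  proof
    assume "snd p \<in> translate B f0"
    then obtain w where w: "w \<in> B" "snd p = w + f0" by (auto simp: translate_def)
    have weq: "w = snd p + u" using w(2) f0_def by (simp add: algebra_simps)
    have "poly_mapping.lookup w D = poly_mapping.lookup u D" using weq Dp p by (simp add: lookup_add)
    hence "w \<in> B'" using w(1) ua B'_def by simp
    hence "\<phi> u \<le> \<phi> w" using u(2) by blast
    moreover have "\<phi> w = \<phi> (snd p) + \<phi> u" using weq add by simp
    ultimately show False using neg p by force
  qed
  define c where "c = - s * (\<bar>\<phi> u\<bar> + 1)"
  define \<psi> where "\<psi> = (\<lambda>x. \<phi> x + c * poly_mapping.lookup x D)"
  have addpsi: "\<psi> (a + b) = \<psi> a + \<psi> b" for a b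
    unfolding \<psi>_def by (simp add: add lookup_add algebra_simps)
  have psi_old: "\<psi> (snd p) < 0" if "p \<in> set xs" for p
    using that neg Dp unfolding \<psi>_def by auto
  have "(\<bar>\<phi> u\<bar> + 1) * a \<le> (\<bar>\<phi> u\<bar> + 1) * (-1)"
    by (rule mult_left_mono) (use aneg in auto)
  moreover have "\<psi> f0 = - \<phi> u + (\<bar>\<phi> u\<bar> + 1) * a"
    unfolding \<psi>_def f0_def c_def using ua phineg by (simp add: algebra_simps)
  ultimately have psi_new: "\<psi> f0 < 0" by simp
  obtain D1 where D1: "Poly_Mapping.keys u \<subseteq> {..<D1}" using finite_nat_iff_bounded[of "Poly_Mapping.keys u"] by auto
  define D' where "D' = max D D1"
  have Dnew: "\<forall>p\<in>set ((N, f0) # xs). \<forall>k\<ge>D'. poly_mapping.lookup (snd p) k = 0"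
  proof (intro ballI allI impI)
    fix p k assume p: "p \<in> set ((N, f0) # xs)" and k: "D' \<le> k"
    show "poly_mapping.lookup (snd p) k = 0"
    proof (cases "p = (N, f0)")
      case True
      have "k \<notin> Poly_Mapping.keys u" using D1 k D'_def by auto
      thus ?thesis using True f0_def by (simp add: in_keys_iff)
    next
      case False thus ?thesis using p Dp k D'_def by auto
    qed
  qed
  have incr_new: "incremental W ((N, f0) # xs)"
    unfolding incremental_def
  proof (intro conjI allI impI)
    show "sorted_wrt (\<lambda>p q. fst q \<le> fst p) ((N, f0) # xs)"
      using incr Np by (auto simp: incremental_def)
  next
    fix i assume i: "i < length ((N, f0) # xs)"
    show "snd (((N, f0) # xs) ! i) \<notin> (\<Union>j<i. translate (W (fst (((N, f0) # xs) ! j))) (snd (((N, f0) # xs) ! j)))"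
    proof (cases i)
      case 0 thus ?thesis by simp
    next
      case (Suc i')
      have i': "i' < length xs" using i Suc by simp
      have old: "snd (xs ! i') \<notin> (\<Union>j<i'. translate (W (fst (xs ! j))) (snd (xs ! j)))"
        using incr i' by (auto simp: incremental_def)
      have new: "snd (xs ! i') \<notin> translate B f0" using notin[OF nth_mem[OF i']] .
      show ?thesis using old new Suc B_def by (auto simp: lessThan_Suc_eq_insert_0)
    qed
  qed
  have zs_new: "\<forall>p\<in>set ((N, f0) # xs). 0 \<in> translate (W (fst p)) (snd p)"
    using zs uB B_def f0_def by (auto simp: translate_def intro!: image_eqI[of _ _ u])
  have "(\<forall>a b. \<psi> (a + b) = \<psi> a + \<psi> b) \<and> (\<forall>p\<in>set ((N, f0) # xs). \<psi> (snd p) < 0)"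
    using psi_old psi_new addpsi by auto
  hence ex\<psi>: "\<exists>\<phi>::zinf \<Rightarrow> int. (\<forall>a b. \<phi> (a + b) = \<phi> a + \<phi> b) \<and> (\<forall>p\<in>set ((N, f0) # xs). \<phi> (snd p) < 0)"
    by blast
  have "length ((N, f0) # xs) = Suc m" using len by simp
  with ex\<psi> show ?case using incr_new zs_new Dnew by blast
qed

theorem corollary2p8:
  "\<not> (\<exists>W :: nat \<Rightarrow> zinf set. incompressible W \<and> folner W)"
proof
  assume "\<exists>W :: nat \<Rightarrow> zinf set. incompressible W \<and> folner W"
  then obtain W :: "nat \<Rightarrow> zinf set" where ic: "incompressible W" and fo: "folner W" by blast
  have fin: "\<And>n. finite (W n)" and z: "\<And>n. 0 \<in> W n" and inc: "\<And>n. W n \<subseteq> W (Suc n)"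
    using ic by (auto simp: incompressible_def)
  obtain C :: nat where C: "\<And>xs. incremental W xs \<Longrightarrow> count_zero W xs \<le> C"
    using ic by (auto simp: incompressible_def)
  have nz: "\<And>k. \<exists>N. \<exists>w\<in>W N. poly_mapping.lookup w k \<noteq> 0" using folner_nz[OF fin z fo] by blast
  obtain xs where len: "length xs = Suc C" and incr: "incremental W xs"
    and zs: "\<forall>p\<in>set xs. 0 \<in> translate (W (fst p)) (snd p)"
    using construct[OF fin z inc nz, of "Suc C"] by blast
  have "{i. i < length xs \<and> 0 \<in> translate (W (fst (xs ! i))) (snd (xs ! i))} = {..<length xs}"
    using zs by auto
  hence "count_zero W xs = Suc C" using len by (simp add: count_zero_def)
  with C[OF incr] show False by simp
qed

end
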